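(* If there exists a depth assignment $d:\Sigma^n\to\Sigma$ such that the valid subgraph of $B_n$ has a Hamiltonian cycle, then such a cycle $s_0,s_1,\dots,s_{N-1}$ (with $N=k^n$) corresponds to a de Bruijn sequence $s_0[0]s_1[0]\cdots s_{N-1}[0]$ of order $n$ whose discrepancy is at most $n+1$.
   Context: Let $k\ge 1$ be an integer, $\Sigma=\{0,1,\dots,k-1\}$ with arithmetic on symbols taken modulo $k$, and $n\ge 1$. For $s\in\Sigma^n$ write $s=s[0]\cdots s[n-1]$. The de Bruijn graph $B_n$ has node set $\Sigma^n$ and an arc $(s,t)$ iff $s[1]\cdots s[n-1]=t[0]\cdots t[n-2]$. A depth assignment is any function $d:\Sigma^n\to\Sigma$, written $s\mapsto d_s$. An arc $(s,t)$ of $B_n$ is valid (with respect to $d$) if, with $b=s[0]$ and $c=t[n-1]$, either ($b+1=c$ and $d_s=d_t$) or ($b+1=d_t$ and $c=d_s$); the valid arcs (on all of $\Sigma^n$) form the valid subgraph. A de Bruijn sequence of order $n$ is a circular string of length $k^n$ in which every string in $\Sigma^n$ occurs exactly once. The discrepancy of a string $w$ is the maximum over all substrings $s$ of $w$ (viewed circularly) of $\max_{a\in\Sigma}|s|_a-\min_{c\in\Sigma}|s|_c$, where $|s|_a$ is the number of occurrences of $a$ in $s$. *)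

theory Defs
  imports Main
begin

definition words :: "nat \<Rightarrow> nat \<Rightarrow> nat list set" where
  "words k n = {s. length s = n \<and> set s \<subseteq> {..<k}}"

definition db_arc :: "nat \<Rightarrow> nat \<Rightarrow> nat list \<Rightarrow> nat list \<Rightarrow> bool" where
  "db_arc k n s t \<longleftrightarrow> s \<in> words k n \<and> t \<in> words k n \<and> tl s = butlast t"

definition valid_arc :: "nat \<Rightarrow> nat \<Rightarrow> (nat list \<Rightarrow> nat) \<Rightarrow> nat list \<Rightarrow> nat list \<Rightarrow> bool" where
  "valid_arc k n d s t \<longleftrightarrow> db_arc k n s t \<and>
     (let b = s ! 0; c = t ! (n - 1) in
       ((b + 1) mod k = c \<and> d s = d t) \<or> ((b + 1) mod k = d t \<and> c = d s))"

definition circ_sub :: "nat list \<Rightarrow> nat \<Rightarrow> nat \<Rightarrow> nat list" where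
  "circ_sub w i l = map (\<lambda>j. w ! ((i + j) mod length w)) [0..<l]"

definition de_bruijn :: "nat \<Rightarrow> nat \<Rightarrow> nat list \<Rightarrow> bool" where
  "de_bruijn k n w \<longleftrightarrow> length w = k ^ n \<and> set w \<subseteq> {..<k} \<and>
     (\<forall>s \<in> words k n. \<exists>!i. i < length w \<and> circ_sub w i n = s)"

definition discrepancy :: "nat \<Rightarrow> nat list \<Rightarrow> int" where
  "discrepancy k w = Max {int (count_list s a) - int (count_list s c) | s a c.
      (\<exists>i l. i < length w \<and> l \<le> length w \<and> s = circ_sub w i l) \<and> a < k \<and> c < k}"

end

theory Submission
  imports Defs
begin

lemma sum_count_filter:
  assumes "finite A"
  shows "(\<Sum>x\<in>A. count_list s x) = length (filter (\<lambda>y. y \<in> A) s)"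
proof (induction s)
  case Nil then show ?case by simp
next
  case (Cons y s)
  have "(\<Sum>x\<in>A. count_list (y # s) x) = (\<Sum>x\<in>A. count_list s x) + (\<Sum>x\<in>A. if y = x then 1 else 0)"
    unfolding sum.distrib[symmetric] by (rule sum.cong) auto
  also have "(\<Sum>x\<in>A. (if y = x then 1 else 0::nat)) = (if y \<in> A then 1 else 0)"
    using assms by (simp add: sum.delta)
  finally show ?case using Cons by simp
qed

lemma sum_ind_le1:
  assumes "finite A"
  shows "(\<Sum>x\<in>A. (if e = x then 1 else 0::nat)) \<le> 1"
  using assms by (simp add: sum.delta)

lemma count_map_upt:
  "count_list (map f [0..<l]) a = (\<Sum>j<l. if f j = a then 1 else 0)"
  by (induction l) auto

definition cntd :: "(nat list \<Rightarrow> nat) \<Rightarrow> nat list \<Rightarrow> nat \<Rightarrow> nat" where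
  "cntd d s x = count_list s x + (if d s = x then 1 else 0)"

lemma cntd_sum_le:
  assumes "finite A" "length s = n"
  shows "(\<Sum>x\<in>A. cntd d s x) \<le> n + 1"
proof -
  have "(\<Sum>x\<in>A. cntd d s x) = (\<Sum>x\<in>A. count_list s x) + (\<Sum>x\<in>A. (if d s = x then 1 else 0))"
    unfolding cntd_def by (simp add: sum.distrib)
  also have "\<dots> \<le> n + 1"
    using sum_count_filter[OF assms(1), of s] sum_ind_le1[OF assms(1), of "d s"] assms(2)
    by (metis add_mono length_filter_le)
  finally show ?thesis .
qed

lemma arc_step:
  assumes "valid_arc k n d s t" "n \<ge> 1"
  shows "cntd d t x + (if s ! 0 = x then 1 else 0) = cntd d s x + (if (s ! 0 + 1) mod k = x then 1 else 0)"
proof -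
  from assms have w: "s \<in> words k n" "t \<in> words k n" and tb: "tl s = butlast t"
    unfolding valid_arc_def db_arc_def by auto
  have ls: "length s = n" and lt: "length t = n" using w unfolding words_def by auto
  have s: "s = s ! 0 # tl s" using ls assms(2) by (cases s) auto
  have tne: "t \<noteq> []" using lt assms(2) by auto
  have "t = butlast t @ [last t]" using tne by simp
  moreover have "last t = t ! (n - 1)" using tne lt by (simp add: last_conv_nth)
  ultimately have t: "t = tl s @ [t ! (n - 1)]" using tb by simp
  have cs: "count_list s x = count_list (tl s) x + (if s ! 0 = x then 1 else 0)"
    by (subst s) simp
  have ct: "count_list t x = count_list (tl s) x + (if t ! (n - 1) = x then 1 else 0)"
    by (subst t) simp
  have v: "((s ! 0 + 1) mod k = t ! (n - 1) \<and> d s = d t) \<or> ((s ! 0 + 1) mod k = d t \<and> t ! (n - 1) = d s)"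
    using assms(1) unfolding valid_arc_def Let_def by auto
  show ?thesis using v unfolding cntd_def cs ct by (elim disjE conjE) simp_all
qed

lemma pointwise:
  fixes a c x k :: nat
  assumes "x < k" "a < k" "c < k" "a \<noteq> c"
  defines "A \<equiv> {x. x < k \<and> (if c < a then c < x \<and> x \<le> a else x \<le> a \<or> c < x)}"
  shows "(if x \<in> A then 1 else 0) + (if x = c then 1 else 0) =
         (if (x + 1) mod k \<in> A then 1 else (0::nat)) + (if x = a then 1 else 0)"
proof -
  have m: "(x + 1) mod k = (if x + 1 = k then 0 else x + 1)" using assms(1) by auto
  show ?thesis unfolding m A_def using assms(1-4) by auto
qed

theorem theorem2:
  fixes k n :: nat and d :: "nat list \<Rightarrow> nat" and cyc :: "nat list list"
  assumes "k \<ge> 1" and "n \<ge> 1"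
    and "\<forall>s \<in> words k n. d s < k"
    and "length cyc = k ^ n" and "distinct cyc" and "set cyc = words k n"
    and "\<forall>i < length cyc. valid_arc k n d (cyc ! i) (cyc ! ((i + 1) mod length cyc))"
  shows "de_bruijn k n (map (\<lambda>s. s ! 0) cyc) \<and>
         discrepancy k (map (\<lambda>s. s ! 0) cyc) \<le> int n + 1"
proof -
  define N where "N = length cyc"
  define w where "w = map (\<lambda>s. s ! 0) cyc"
  define nd where "nd j = cyc ! (j mod N)" for j
  have N1: "N \<ge> 1" using assms(1,4) unfolding N_def by simp
  have lw: "length w = N" unfolding w_def N_def by simp
  have arc: "valid_arc k n d (nd j) (nd (Suc j))" for j
  proof -
    have "j mod N < length cyc" using N1 unfolding N_def by (simp add: Suc_le_eq)
    then have "valid_arc k n d (cyc ! (j mod N)) (cyc ! ((j mod N + 1) mod N))"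
      using assms(7) unfolding N_def by auto
    then show ?thesis unfolding nd_def by (simp add: mod_Suc_eq)
  qed
  have ndw: "nd j \<in> words k n" for j
  proof -
    have "j mod N < length cyc" using N1 unfolding N_def by (simp add: Suc_le_eq)
    then show ?thesis unfolding nd_def using assms(6) nth_mem by blast
  qed
  have ndl: "length (nd j) = n" for j using ndw[of j] unfolding words_def by simp
  have h0: "s ! 0 < k" if "s \<in> words k n" for s
  proof -
    have "length s = n" "set s \<subseteq> {..<k}" using that unfolding words_def by auto
    moreover then have "s ! 0 \<in> set s" using assms(2) by (intro nth_mem) simp
    ultimately show ?thesis by blast
  qed
  have nd0: "nd j ! 0 < k" for j using h0 ndw by blast
  have shift1: "nd (Suc j) ! i = nd j ! Suc i" if "Suc i < n" for j i
  proof -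
    have tb: "tl (nd j) = butlast (nd (Suc j))" using arc[of j] unfolding valid_arc_def db_arc_def by auto
    have "nd (Suc j) ! i = butlast (nd (Suc j)) ! i" using that ndl[of "Suc j"] by (simp add: nth_butlast)
    also have "\<dots> = tl (nd j) ! i" using tb by simp
    also have "\<dots> = nd j ! Suc i" using that ndl[of j] by (simp add: nth_tl)
    finally show ?thesis .
  qed
  have shift: "nd (j + m) ! i = nd j ! (i + m)" if "i + m < n" for j i m
    using that
  proof (induction m arbitrary: i)
    case 0 then show ?case by simp
  next
    case (Suc m)
    have "nd (j + Suc m) ! i = nd (j + m) ! Suc i" using shift1[of i "j + m"] Suc.prems by simp
    also have "\<dots> = nd j ! (Suc i + m)" using Suc.IH[of "Suc i"] Suc.prems by simp
    finally show ?case by simp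
  qed
  have cs: "circ_sub w i l = map (\<lambda>j. nd (i + j) ! 0) [0..<l]" for i l
    unfolding circ_sub_def lw by (rule map_cong) (use N1 in \<open>auto simp: w_def nd_def N_def Suc_le_eq\<close>)
  have csn: "circ_sub w i n = nd i" for i
    unfolding cs by (rule nth_equalityI) (auto simp: ndl shift[of 0 _ i, simplified])
  have db: "de_bruijn k n w"
    unfolding de_bruijn_def
  proof (intro conjI ballI)
    show "length w = k ^ n" using lw assms(4) N_def by simp
    show "set w \<subseteq> {..<k}" unfolding w_def using h0 assms(6) by auto
    fix s assume s: "s \<in> words k n"
    then obtain i where i: "i < N" "cyc ! i = s" using assms(6) unfolding N_def by (metis in_set_conv_nth)
    have ndi: "nd i = cyc ! i" if "i < N" for i using that unfolding nd_def by simp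
    show "\<exists>!i. i < length w \<and> circ_sub w i n = s"
    proof (rule ex1I[of _ i])
      show "i < length w \<and> circ_sub w i n = s" using i lw csn ndi by simp
      fix j assume "j < length w \<and> circ_sub w j n = s"
      then have "j < N" "cyc ! j = cyc ! i" using i lw csn ndi by auto
      then show "j = i" using assms(5) i unfolding N_def by (metis nth_eq_iff_index_eq)
    qed
  qed
  have bound: "int (count_list (circ_sub w i l) a) - int (count_list (circ_sub w i l) c) \<le> int n + 1"
    if "a < k" "c < k" for i l a c
  proof (cases "a = c")
    case True then show ?thesis by simp
  next
    case False
    define A where "A = {x. x < k \<and> (if c < a then c < x \<and> x \<le> a else x \<le> a \<or> c < x)}"
    have fA: "finite A" unfolding A_def by simp
    define b where "b j = nd (i + j) ! 0" for j
    define S where "S j = (\<Sum>x\<in>A. cntd d (nd (i + j)) x)" for j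
    define P where "P l = (\<Sum>j<l. if b j \<in> A then 1 else 0::nat)" for l
    define Q where "Q l = (\<Sum>j<l. if (b j + 1) mod k \<in> A then 1 else 0::nat)" for l
    define C where "C x l = (\<Sum>j<l. if b j = x then 1 else 0::nat)" for x l
    have win: "S l + P l = S 0 + Q l" for l
    proof (induction l)
      case 0 then show ?case by (simp add: P_def Q_def)
    next
      case (Suc l)
      have st: "(\<Sum>x\<in>A. cntd d (nd (Suc (i + l))) x) + (if b l \<in> A then 1 else 0)
          = (\<Sum>x\<in>A. cntd d (nd (i + l)) x) + (if (b l + 1) mod k \<in> A then 1 else 0)"
      proof -
        have "(\<Sum>x\<in>A. cntd d (nd (Suc (i + l))) x + (if b l = x then 1 else 0))
           = (\<Sum>x\<in>A. cntd d (nd (i + l)) x + (if (b l + 1) mod k = x then 1 else 0))"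
          using arc_step[OF arc[of "i + l"] assms(2)] unfolding b_def by simp
        then show ?thesis using fA by (simp add: sum.distrib sum.delta)
      qed
      show ?case using Suc st by (simp add: S_def P_def Q_def)
    qed
    have pw: "P l + C c l = Q l + C a l"
    proof -
      have "P l + C c l = (\<Sum>j<l. (if b j \<in> A then 1 else 0) + (if b j = c then 1 else 0))"
        unfolding P_def C_def by (simp add: sum.distrib)
      also have "\<dots> = (\<Sum>j<l. (if (b j + 1) mod k \<in> A then 1 else 0) + (if b j = a then 1 else 0))"
      proof (rule sum.cong[OF refl])
        fix j assume "j \<in> {..<l}"
        show "(if b j \<in> A then 1 else 0) + (if b j = c then 1 else 0) =
          (if (b j + 1) mod k \<in> A then 1 else 0) + (if b j = a then 1 else (0::nat))"
          unfolding A_def b_def by (rule pointwise[OF nd0[of "i + j"] that False])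
      qed
      also have "\<dots> = Q l + C a l" unfolding Q_def C_def by (simp add: sum.distrib)
      finally show ?thesis .
    qed
    have S0: "S 0 \<le> n + 1" unfolding S_def using cntd_sum_le[OF fA ndl] by simp
    have ca: "count_list (circ_sub w i l) a = C a l" "count_list (circ_sub w i l) c = C c l"
      unfolding cs count_map_upt C_def b_def by simp_all
    show ?thesis unfolding ca using win[of l] pw S0 by linarith
  qed
  define D where "D = {int (count_list s a) - int (count_list s c) | s a c.
      (\<exists>i l. i < length w \<and> l \<le> length w \<and> s = circ_sub w i l) \<and> a < k \<and> c < k}"
  have Dsub: "D \<subseteq> (\<lambda>(i, l, a, c). int (count_list (circ_sub w i l) a) - int (count_list (circ_sub w i l) c))
      ` ({..<length w} \<times> {..length w} \<times> {..<k} \<times> {..<k})"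
    unfolding D_def by (auto simp: image_iff) (metis atMost_iff lessThan_iff)
  have fD: "finite D" by (rule finite_subset[OF Dsub]) simp
  have neD: "D \<noteq> {}"
  proof -
    have "(0::int) = int (count_list (circ_sub w 0 0) 0) - int (count_list (circ_sub w 0 0) 0) \<and>
      (\<exists>i l. i < length w \<and> l \<le> length w \<and> circ_sub w 0 0 = circ_sub w i l) \<and> 0 < k \<and> 0 < k"
      using N1 lw assms(1) by (auto intro!: exI[of _ 0])
    then have "0 \<in> D" unfolding D_def by blast
    then show ?thesis by blast
  qed
  have "Max D \<le> int n + 1"
    using fD neD by (subst Max_le_iff) (auto simp: D_def intro: bound)
  then have "discrepancy k w \<le> int n + 1" unfolding discrepancy_def D_def .
  then show ?thesis using db unfolding w_def by simp
qed

end
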